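(* Let $d\ge2$ and let $g:\mathbb{R}\to\mathbb{R}$ be a locally Lipschitz function. Assume that for every bounded interval $[a,b]$ there is a separately convex function $f_{[a,b]}:\mathbb{R}^d\to\mathbb{R}$ such that $f_{[a,b]}(u,u,\dots,u)=g(u)$ for each $u\in[a,b]$. Then there is a separately convex function $f:\mathbb{R}^d\to\mathbb{R}$ such that $f(u,u,\dots,u)=g(u)$ for each $u\in\mathbb{R}$.
   Context: A function $f:\mathbb{R}^d\to\mathbb{R}$ is called separately convex if it is convex on every line parallel to a coordinate axis. *)

theory Defs
  imports "HOL-Analysis.Analysis"
begin

definition separately_convex :: "(real ^ 'n \<Rightarrow> real) \<Rightarrow> bool" where
  "separately_convex f \<longleftrightarrow>
     (\<forall>x i. convex_on UNIV (\<lambda>t. f (x + t *\<^sub>R axis i 1)))"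

definition locally_lipschitz :: "(real \<Rightarrow> real) \<Rightarrow> bool" where
  "locally_lipschitz g \<longleftrightarrow> (\<forall>a b. \<exists>L. L-lipschitz_on {a..b} g)"

end

theory Submission
  imports Defs
begin



lemma conv_affine: "convex_on UNIV (\<lambda>t::real. a*t + b)"
  unfolding convex_on_def
proof (auto)
  fix x y u v :: real assume "u + v = 1"
  then show "a * (u * x + v * y) + b \<le> u * (a * x + b) + v * (a * y + b)"
    by (simp add: algebra_simps) (metis distrib_left mult.right_neutral order_refl)
qed

lemma conv_max:
  assumes f: "convex_on S f" and g: "convex_on S g"
  shows "convex_on S (\<lambda>x. max (f x) (g x))"
  unfolding convex_on_def
proof (intro conjI ballI allI impI)
  show "convex S" using f by (simp add: convex_on_def)
next
  fix x y and u v :: real assume xy: "x \<in> S" "y \<in> S" and u: "0 \<le> u" and v: "0 \<le> v" and uv: "u + v = 1"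
  have 1: "f (u *\<^sub>R x + v *\<^sub>R y) \<le> u * f x + v * f y"
    using f xy u v uv unfolding convex_on_def by blast
  have 2: "g (u *\<^sub>R x + v *\<^sub>R y) \<le> u * g x + v * g y"
    using g xy u v uv unfolding convex_on_def by blast
  have "u * f x \<le> u * max (f x) (g x)" "v * f y \<le> v * max (f y) (g y)"
       "u * g x \<le> u * max (f x) (g x)" "v * g y \<le> v * max (f y) (g y)"
    using u v by (auto intro: mult_left_mono)
  then show "max (f (u *\<^sub>R x + v *\<^sub>R y)) (g (u *\<^sub>R x + v *\<^sub>R y)) \<le> u * max (f x) (g x) + v * max (f y) (g y)"
    using 1 2 by linarith
qed

lemma conv_piece:
  assumes "\<gamma> \<ge> 0"
  shows "convex_on UNIV (\<lambda>a::real. \<alpha>*a + \<beta> + \<gamma> * max (\<sigma>*a + \<delta>) 0)"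
proof -
  have "convex_on UNIV (\<lambda>a::real. max (\<sigma>*a + \<delta>) 0)"
    by (rule conv_max[OF conv_affine]) (simp add: convex_on_const)
  then have "convex_on UNIV (\<lambda>a::real. \<gamma> * max (\<sigma>*a + \<delta>) 0)"
    using assms by (rule convex_on_cmul[rotated])
  then show ?thesis
    using conv_affine[of \<alpha> \<beta>] by (rule convex_on_add[rotated])
qed

lemma conv_translate:
  assumes "convex_on UNIV (\<phi>::real \<Rightarrow> real)"
  shows "convex_on UNIV (\<lambda>t. \<phi> (c + t))"
  unfolding convex_on_def
proof (auto)
  fix x y u v :: real assume uv: "0 \<le> u" "0 \<le> v" "u + v = 1"
  have "c + (u * x + v * y) = u * (c + x) + v * (c + y)" using uv
    by (simp add: algebra_simps) (metis distrib_left mult.right_neutral)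
  then show "\<phi> (c + (u * x + v * y)) \<le> u * \<phi> (c + x) + v * \<phi> (c + y)"
    using assms uv unfolding convex_on_def by auto
qed

lemma line_comp:
  "(x + t *\<^sub>R axis k (1::real)) $ i = x $ i + (if i = k then t else 0)"
  by (simp add: axis_def)

lemma sc_of_two:
  fixes h :: "real \<Rightarrow> real \<Rightarrow> real" and i j :: "'n::finite"
  assumes ij: "i \<noteq> j"
    and h1: "\<And>b. convex_on UNIV (\<lambda>a. h a b)" and h2: "\<And>a. convex_on UNIV (\<lambda>b. h a b)"
  shows "separately_convex (\<lambda>x::real^'n. h (x$i) (x$j))"
  unfolding separately_convex_def
proof (intro allI)
  fix x :: "real^'n" and k
  show "convex_on UNIV (\<lambda>t. h ((x + t *\<^sub>R axis k 1) $ i) ((x + t *\<^sub>R axis k 1) $ j))"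
  proof (cases "k = i")
    case True
    then show ?thesis using ij conv_translate[OF h1[of "x$j"], of "x$i"] by (simp add: line_comp axis_def)
  next
    case False
    show ?thesis
    proof (cases "k = j")
      case True
      then show ?thesis using False conv_translate[OF h2[of "x$i"], of "x$j"] by (simp add: line_comp axis_def)
    next
      case False2: False
      then show ?thesis using False by (simp add: line_comp axis_def convex_on_const)
    qed
  qed
qed

lemma sc_add: "separately_convex f \<Longrightarrow> separately_convex g \<Longrightarrow> separately_convex (\<lambda>x. f x + g x)"
  unfolding separately_convex_def by (auto intro: convex_on_add)

lemma sc_cmul: "c \<ge> 0 \<Longrightarrow> separately_convex f \<Longrightarrow> separately_convex (\<lambda>x. c * f x)"
  unfolding separately_convex_def by (auto intro: convex_on_cmul)

lemma sc_max: "separately_convex f \<Longrightarrow> separately_convex g \<Longrightarrow> separately_convex (\<lambda>x. max (f x) (g x))"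
  unfolding separately_convex_def by (auto intro: conv_max)

lemma sc_line:
  assumes "separately_convex f"
  shows "convex_on UNIV (\<lambda>t. f (\<chi> k. if k = j then t else y$k))"
proof -
  define y0 :: "real^'a" where "y0 = (\<chi> k. if k = j then 0 else y$k)"
  have "(\<lambda>t. f (\<chi> k. if k = j then t else y$k)) = (\<lambda>t. f (y0 + t *\<^sub>R axis j (1::real)))"
    by (rule ext, rule arg_cong[where f=f]) (simp add: vec_eq_iff axis_def y0_def)
  then show ?thesis using assms unfolding separately_convex_def by metis
qed

lemma conv_le_max:
  assumes "convex_on UNIV (\<phi>::real\<Rightarrow>real)" "a \<le> t" "t \<le> b"
  shows "\<phi> t \<le> max (\<phi> a) (\<phi> b)"
  using convex_on_le_max[OF convex_on_subset[OF assms(1)]] assms by auto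

lemma conv_lower:
  assumes "convex_on UNIV (\<phi>::real\<Rightarrow>real)"
  shows "\<phi> t \<ge> 2 * \<phi> c - \<phi> (2*c - t)"
proof -
  have "\<phi> ((1 - 1/2) *\<^sub>R t + (1/2) *\<^sub>R (2*c - t)) \<le> (1 - 1/2) * \<phi> t + (1/2) * \<phi> (2*c - t)"
    by (rule convex_onD[OF assms]) auto
  then show ?thesis by (simp add: algebra_simps)
qed




lemma upd_self: "(\<chi> k. if k = j then y$j else y$k) = y"
  by (simp add: vec_eq_iff)

lemma sc_upper:
  fixes f :: "real^'n \<Rightarrow> real"
  assumes sc: "separately_convex f" and fin: "finite S"
  shows "\<forall>x. \<exists>B. \<forall>y. (\<forall>i. i\<notin>S \<longrightarrow> y$i = x$i) \<and> (\<forall>i\<in>S. a \<le> y$i \<and> y$i \<le> b) \<longrightarrow> f y \<le> B"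
  using fin
proof (induction S)
  case empty
  show ?case
  proof
    fix x :: "real^'n"
    show "\<exists>B. \<forall>y. (\<forall>i. i\<notin>{} \<longrightarrow> y$i = x$i) \<and> (\<forall>i\<in>{}. a \<le> y$i \<and> y$i \<le> b) \<longrightarrow> f y \<le> B"
    proof (intro exI[of _ "f x"] allI impI)
      fix y :: "real^'n" assume "(\<forall>i. i\<notin>{} \<longrightarrow> y$i = x$i) \<and> (\<forall>i\<in>{}. a \<le> y$i \<and> y$i \<le> b)"
      then have "y = x" by (simp add: vec_eq_iff)
      then show "f y \<le> f x" by simp
    qed
  qed
next
  case (insert j S)
  show ?case
  proof
    fix x :: "real^'n"
    define xa where "xa = (\<chi> k. if k = j then a else x$k)"
    define xb where "xb = (\<chi> k. if k = j then b else x$k)"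
    obtain Ba where Ba: "\<And>y. (\<forall>i. i\<notin>S \<longrightarrow> y$i = xa$i) \<and> (\<forall>i\<in>S. a \<le> y$i \<and> y$i \<le> b) \<Longrightarrow> f y \<le> Ba"
      using insert.IH by blast
    obtain Bb where Bb: "\<And>y. (\<forall>i. i\<notin>S \<longrightarrow> y$i = xb$i) \<and> (\<forall>i\<in>S. a \<le> y$i \<and> y$i \<le> b) \<Longrightarrow> f y \<le> Bb"
      using insert.IH by blast
    show "\<exists>B. \<forall>y. (\<forall>i. i\<notin>insert j S \<longrightarrow> y$i = x$i) \<and> (\<forall>i\<in>insert j S. a \<le> y$i \<and> y$i \<le> b) \<longrightarrow> f y \<le> B"
    proof (intro exI[of _ "max Ba Bb"] allI impI)
      fix y :: "real^'n"
      assume y: "(\<forall>i. i\<notin>insert j S \<longrightarrow> y$i = x$i) \<and> (\<forall>i\<in>insert j S. a \<le> y$i \<and> y$i \<le> b)"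
      let ?\<phi> = "\<lambda>t. f (\<chi> k. if k = j then t else y$k)"
      have "f y = ?\<phi> (y$j)" by (simp add: upd_self)
      also have "\<dots> \<le> max (?\<phi> a) (?\<phi> b)"
        using conv_le_max[OF sc_line[OF sc]] y by blast
      also have "?\<phi> a \<le> Ba"
        by (rule Ba) (use y insert.hyps in \<open>auto simp: xa_def\<close>)
      also have "?\<phi> b \<le> Bb"
        by (rule Bb) (use y insert.hyps in \<open>auto simp: xb_def\<close>)
      finally show "f y \<le> max Ba Bb" by simp
    qed
  qed
qed

lemma sc_lower:
  fixes f :: "real^'n \<Rightarrow> real"
  assumes sc: "separately_convex f" and fin: "finite S"
  shows "\<forall>x. \<exists>B. \<forall>y. (\<forall>i. i\<notin>S \<longrightarrow> y$i = x$i) \<and> (\<forall>i\<in>S. a \<le> y$i \<and> y$i \<le> b) \<longrightarrow> B \<le> f y"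
  using fin
proof (induction S)
  case empty
  show ?case
  proof
    fix x :: "real^'n"
    show "\<exists>B. \<forall>y. (\<forall>i. i\<notin>{} \<longrightarrow> y$i = x$i) \<and> (\<forall>i\<in>{}. a \<le> y$i \<and> y$i \<le> b) \<longrightarrow> B \<le> f y"
    proof (intro exI[of _ "f x"] allI impI)
      fix y :: "real^'n" assume "(\<forall>i. i\<notin>{} \<longrightarrow> y$i = x$i) \<and> (\<forall>i\<in>{}. a \<le> y$i \<and> y$i \<le> b)"
      then have "y = x" by (simp add: vec_eq_iff)
      then show "f x \<le> f y" by simp
    qed
  qed
next
  case (insert j S)
  show ?case
  proof
    fix x :: "real^'n"
    define c where "c = (a + b) / 2"
    define xc where "xc = (\<chi> k. if k = j then c else x$k)"
    obtain Bc where Bc: "\<And>y. (\<forall>i. i\<notin>S \<longrightarrow> y$i = xc$i) \<and> (\<forall>i\<in>S. a \<le> y$i \<and> y$i \<le> b) \<Longrightarrow> Bc \<le> f y"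
      using insert.IH by blast
    obtain U where U: "\<And>y. (\<forall>i. i\<notin>insert j S \<longrightarrow> y$i = x$i) \<and> (\<forall>i\<in>insert j S. a \<le> y$i \<and> y$i \<le> b) \<Longrightarrow> f y \<le> U"
      using sc_upper[OF sc, of "insert j S" a b] insert.hyps by blast
    show "\<exists>B. \<forall>y. (\<forall>i. i\<notin>insert j S \<longrightarrow> y$i = x$i) \<and> (\<forall>i\<in>insert j S. a \<le> y$i \<and> y$i \<le> b) \<longrightarrow> B \<le> f y"
    proof (intro exI[of _ "2 * Bc - U"] allI impI)
      fix y :: "real^'n"
      assume y: "(\<forall>i. i\<notin>insert j S \<longrightarrow> y$i = x$i) \<and> (\<forall>i\<in>insert j S. a \<le> y$i \<and> y$i \<le> b)"
      let ?\<phi> = "\<lambda>t. f (\<chi> k. if k = j then t else y$k)"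
      have "f y = ?\<phi> (y$j)" by (simp add: upd_self)
      moreover have "?\<phi> (y$j) \<ge> 2 * ?\<phi> c - ?\<phi> (2*c - y$j)"
        using conv_lower[OF sc_line[OF sc]] by blast
      moreover have "Bc \<le> ?\<phi> c"
        by (rule Bc) (use y insert.hyps in \<open>auto simp: xc_def\<close>)
      moreover have "?\<phi> (2*c - y$j) \<le> U"
        by (rule U) (use y insert.hyps in \<open>auto simp: c_def field_simps\<close>)
      ultimately show "2 * Bc - U \<le> f y" by linarith
    qed
  qed
qed

lemma sc_bounded:
  fixes f :: "real^'n \<Rightarrow> real"
  assumes sc: "separately_convex f"
  shows "\<exists>B. \<forall>y. (\<forall>i. a \<le> y$i \<and> y$i \<le> b) \<longrightarrow> \<bar>f y\<bar> \<le> B"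
proof -
  have fu: "finite (UNIV::'n set)" by simp
  obtain U where U: "\<And>y. (\<forall>i. i\<notin>UNIV \<longrightarrow> y$i = (0::real^'n)$i) \<and> (\<forall>i\<in>UNIV. a \<le> y$i \<and> y$i \<le> b) \<Longrightarrow> f y \<le> U"
    using sc_upper[OF sc fu, of a b] by blast
  obtain L where L: "\<And>y. (\<forall>i. i\<notin>UNIV \<longrightarrow> y$i = (0::real^'n)$i) \<and> (\<forall>i\<in>UNIV. a \<le> y$i \<and> y$i \<le> b) \<Longrightarrow> L \<le> f y"
    using sc_lower[OF sc fu, of a b] by blast
  show ?thesis
    by (rule exI[of _ "max U (-L)"]) (use U L in force)
qed




definition gA :: "'n::finite \<Rightarrow> 'n \<Rightarrow> real \<Rightarrow> real^'n \<Rightarrow> real" where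
  "gA i j p x = -((x$i - p)*(x$j - p)) + max (x$i - p) 0 * max (x$j - p) 0"

definition gB :: "'n::finite \<Rightarrow> 'n \<Rightarrow> real \<Rightarrow> real^'n \<Rightarrow> real" where
  "gB i j p x = -((x$i - p)*(x$j - p)) + max (p - x$i) 0 * max (p - x$j) 0"

lemma hA_conv: "convex_on UNIV (\<lambda>a::real. -((a-p)*(b-p)) + max (a-p) 0 * max (b-p) 0)"
proof -
  have eq: "(\<lambda>a::real. -((a-p)*(b-p)) + max (a-p) 0 * max (b-p) 0)
      = (\<lambda>a. (-(b-p))*a + (b-p)*p + max (b-p) 0 * max (1*a + -p) 0)"
    by (auto simp: fun_eq_iff algebra_simps)
  show ?thesis unfolding eq by (rule conv_piece) simp
qed

lemma hB_conv: "convex_on UNIV (\<lambda>a::real. -((a-p)*(b-p)) + max (p-a) 0 * max (p-b) 0)"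
proof -
  have eq: "(\<lambda>a::real. -((a-p)*(b-p)) + max (p-a) 0 * max (p-b) 0)
      = (\<lambda>a. (-(b-p))*a + (b-p)*p + max (p-b) 0 * max ((-1)*a + p) 0)"
    by (auto simp: fun_eq_iff algebra_simps)
  show ?thesis unfolding eq by (rule conv_piece) simp
qed

lemma sc_gA:
  assumes "i \<noteq> j" shows "separately_convex (gA i j p)"
proof -
  have eq: "gA i j p = (\<lambda>x. (\<lambda>a b. -((a-p)*(b-p)) + max (a-p) 0 * max (b-p) 0) (x$i) (x$j))"
    by (simp add: gA_def fun_eq_iff)
  show ?thesis unfolding eq
  proof (rule sc_of_two[OF assms])
    fix b show "convex_on UNIV (\<lambda>a. -((a-p)*(b-p)) + max (a-p) 0 * max (b-p) 0)" by (rule hA_conv)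
  next
    fix a
    have "(\<lambda>b. -((a-p)*(b-p)) + max (a-p) 0 * max (b-p) 0) = (\<lambda>b. -((b-p)*(a-p)) + max (b-p) 0 * max (a-p) 0)"
      by (simp add: fun_eq_iff algebra_simps)
    then show "convex_on UNIV (\<lambda>b. -((a-p)*(b-p)) + max (a-p) 0 * max (b-p) 0)" using hA_conv by simp
  qed
qed

lemma sc_gB:
  assumes "i \<noteq> j" shows "separately_convex (gB i j p)"
proof -
  have eq: "gB i j p = (\<lambda>x. (\<lambda>a b. -((a-p)*(b-p)) + max (p-a) 0 * max (p-b) 0) (x$i) (x$j))"
    by (simp add: gB_def fun_eq_iff)
  show ?thesis unfolding eq
  proof (rule sc_of_two[OF assms])
    fix b show "convex_on UNIV (\<lambda>a. -((a-p)*(b-p)) + max (p-a) 0 * max (p-b) 0)" by (rule hB_conv)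
  next
    fix a
    have "(\<lambda>b. -((a-p)*(b-p)) + max (p-a) 0 * max (p-b) 0) = (\<lambda>b. -((b-p)*(a-p)) + max (p-b) 0 * max (p-a) 0)"
      by (simp add: fun_eq_iff algebra_simps)
    then show "convex_on UNIV (\<lambda>b. -((a-p)*(b-p)) + max (p-a) 0 * max (p-b) 0)" using hB_conv by simp
  qed
qed

lemma gA_diag: "gA i j p (\<chi> l. u) = (if u \<ge> p then 0 else -((u-p)^2))"
  by (auto simp: gA_def power2_eq_square max_def)

lemma gB_diag: "gB i j p (\<chi> l. u) = (if u \<le> p then 0 else -((u-p)^2))"
  by (auto simp: gB_def power2_eq_square max_def algebra_simps)




lemma step:
  fixes G H :: "real^'n \<Rightarrow> real" and g :: "real \<Rightarrow> real" and i j :: 'n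
  assumes ij: "i \<noteq> j" and R: "R \<ge> 1"
    and scG: "separately_convex G" and dG: "\<And>u. -R \<le> u \<Longrightarrow> u \<le> R \<Longrightarrow> G (\<chi> l. u) = g u"
    and scH: "separately_convex H" and dH: "\<And>u. -(R+1) \<le> u \<Longrightarrow> u \<le> R+1 \<Longrightarrow> H (\<chi> l. u) = g u"
  shows "\<exists>G'. separately_convex G' \<and> (\<forall>u. -(R+1) \<le> u \<and> u \<le> R+1 \<longrightarrow> G' (\<chi> l. u) = g u)
              \<and> (\<forall>x. (\<forall>l. \<bar>x$l\<bar> \<le> R - 1) \<longrightarrow> G' x = G x)"
proof -
  obtain B1 where B1: "\<And>y. (\<forall>l. -(R+1) \<le> y$l \<and> y$l \<le> R+1) \<Longrightarrow> \<bar>H y\<bar> \<le> B1"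
    using sc_bounded[OF scH, of "-(R+1)" "R+1"] by blast
  obtain B2 where B2: "\<And>y. (\<forall>l. -(R+1) \<le> y$l \<and> y$l \<le> R+1) \<Longrightarrow> \<bar>G y\<bar> \<le> B2"
    using sc_bounded[OF scG, of "-(R+1)" "R+1"] by blast
  define c where "c = 4*(\<bar>B1\<bar> + \<bar>B2\<bar>)"
  have c0: "c \<ge> 0" by (simp add: c_def)
  define m where "m = R - 1/2"
  define Gt where "Gt = (\<lambda>x. G x + c * gB i j m x + c * gA i j (-m) x)"
  define Hp where "Hp = (\<lambda>x. H x + c * gA i j m x)"
  define Hm where "Hm = (\<lambda>x. H x + c * gB i j (-m) x)"
  define G' where "G' = (\<lambda>x. max (Gt x) (max (Hp x) (Hm x)))"
  have sc: "separately_convex G'" unfolding G'_def Gt_def Hp_def Hm_def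
    by (intro sc_max sc_add sc_cmul c0 scG scH sc_gA sc_gB ij)
  have diag: "\<forall>u. -(R+1) \<le> u \<and> u \<le> R+1 \<longrightarrow> G' (\<chi> l. u) = g u"
  proof (intro allI impI)
    fix u :: real assume u: "-(R+1) \<le> u \<and> u \<le> R+1"
    define D :: "real^'n" where "D = (\<chi> l. u)"
    have Dbox: "\<forall>l. -(R+1) \<le> D$l \<and> D$l \<le> R+1" using u by (simp add: D_def)
    have hD: "H D = g u" using dH u by (simp add: D_def)
    have sq1: "c * (u-m)^2 \<ge> 0" "c * (u+m)^2 \<ge> 0" using c0 by auto
    have Hp1: "Hp D \<le> g u" and Hp2: "u \<ge> m \<Longrightarrow> Hp D = g u"
      using sq1 by (auto simp: Hp_def D_def[symmetric] gA_diag[of i j m u, folded D_def] hD)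
    have Hm1: "Hm D \<le> g u" and Hm2: "u \<le> -m \<Longrightarrow> Hm D = g u"
      using sq1 by (auto simp: Hm_def gB_diag[of i j "-m" u, folded D_def] hD)
    have GtD: "Gt D = G D + c*(if u \<le> m then 0 else -((u-m)^2)) + c*(if -m \<le> u then 0 else -((u+m)^2))"
      by (simp add: Gt_def gB_diag[of i j m u, folded D_def] gA_diag[of i j "-m" u, folded D_def])
    have Gt1: "Gt D \<le> g u"
    proof (cases "\<bar>u\<bar> \<le> R")
      case True
      then have "G D = g u" using dG by (simp add: D_def)
      then show ?thesis using GtD sq1 by auto
    next
      case False
      have GB: "G D \<le> \<bar>B2\<bar>" using B2[OF Dbox] by linarith
      have HB: "- \<bar>B1\<bar> \<le> g u" using B1[OF Dbox] hD by linarith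
      show ?thesis
      proof (cases "u > R")
        case True
        have h: "1/2 \<le> u - m" using True by (simp add: m_def)
        have "(1/2)*(1/2) \<le> (u-m)*(u-m)" by (rule mult_mono) (use h in auto)
        then have "1/4 \<le> (u-m)^2" by (simp add: power2_eq_square)
        then have "c*(1/4) \<le> c * (u-m)^2" using c0 by (rule mult_left_mono)
        moreover have "\<not> u \<le> m" "-m \<le> u" using True R by (auto simp: m_def)
        ultimately show ?thesis using GtD GB HB by (simp add: c_def)
      next
        case False2: False
        then have uu: "u < -R" using False by auto
        have h: "1/2 \<le> -(u + m)" using uu by (simp add: m_def)
        have "(1/2)*(1/2) \<le> (-(u+m))*(-(u+m))" by (rule mult_mono) (use h in auto)
        moreover have "(-(u+m))*(-(u+m)) = (u+m)*(u+m)" by (rule minus_mult_minus)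
        ultimately have "1/4 \<le> (u+m)^2" by (simp only: power2_eq_square)
        then have "c*(1/4) \<le> c * (u+m)^2" using c0 by (rule mult_left_mono)
        moreover have "u \<le> m" "\<not> -m \<le> u" using uu R by (auto simp: m_def)
        ultimately show ?thesis using GtD GB HB by (simp add: c_def)
      qed
    qed
    have Gt2: "\<bar>u\<bar> \<le> m \<Longrightarrow> Gt D = g u"
    proof -
      assume um: "\<bar>u\<bar> \<le> m"
      then have "G D = g u" using dG by (simp add: D_def m_def)
      then show ?thesis using GtD um by auto
    qed
    have "G' D = g u"
    proof (cases "u \<ge> m")
      case True then show ?thesis using Hp2 Hp1 Hm1 Gt1 by (simp add: G'_def)
    next
      case False
      show ?thesis
      proof (cases "u \<le> -m")
        case True then show ?thesis using Hm2 Hp1 Hm1 Gt1 by (simp add: G'_def)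
      next
        case False2: False
        then show ?thesis using False Gt2 Hp1 Hm1 Gt1 by (simp add: G'_def)
      qed
    qed
    then show "G' (\<chi> l. u) = g u" by (simp add: D_def)
  qed
  have inner: "\<forall>x. (\<forall>l. \<bar>x$l\<bar> \<le> R - 1) \<longrightarrow> G' x = G x"
  proof (intro allI impI)
    fix x :: "real^'n" assume x: "\<forall>l. \<bar>x$l\<bar> \<le> R - 1"
    have xi: "x$i \<le> m - 1/2" "-m + 1/2 \<le> x$i" using x[rule_format, of i] by (auto simp: m_def)
    have xj: "x$j \<le> m - 1/2" "-m + 1/2 \<le> x$j" using x[rule_format, of j] by (auto simp: m_def)
    have box: "\<forall>l. -(R+1) \<le> x$l \<and> x$l \<le> R+1"
    proof
      fix l show "-(R+1) \<le> x$l \<and> x$l \<le> R+1" using x[rule_format, of l] by linarith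
    qed
    have z1: "gB i j m x = 0" using xi xj by (simp add: gB_def max_def algebra_simps)
    have z2: "gA i j (-m) x = 0" using xi xj by (simp add: gA_def max_def algebra_simps)
    have "(1/2)*(1/2) \<le> (m - x$i) * (m - x$j)" by (rule mult_mono) (use xi xj in auto)
    then have a1: "gA i j m x \<le> -1/4" using xi xj by (simp add: gA_def max_def algebra_simps)
    have "(1/2)*(1/2) \<le> (x$i + m) * (x$j + m)" by (rule mult_mono) (use xi xj in auto)
    then have a2: "gB i j (-m) x \<le> -1/4" using xi xj by (simp add: gB_def max_def algebra_simps)
    have "c * gA i j m x \<le> c * (-1/4)" using a1 c0 by (rule mult_left_mono)
    moreover have "c * gB i j (-m) x \<le> c * (-1/4)" using a2 c0 by (rule mult_left_mono)
    moreover have "H x \<le> \<bar>B1\<bar>" "- \<bar>B2\<bar> \<le> G x" using B1[OF box] B2[OF box] by linarith+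
    moreover have "c * (-1/4) = -(\<bar>B1\<bar> + \<bar>B2\<bar>)" unfolding c_def by (simp add: field_simps)
    ultimately have "Hp x \<le> G x" "Hm x \<le> G x"
      unfolding Hp_def Hm_def by linarith+
    moreover have "Gt x = G x" by (simp add: Gt_def z1 z2)
    ultimately have "Hp x \<le> G x" "Hm x \<le> G x" "Gt x = G x" by auto
    then show "G' x = G x" by (simp add: G'_def)
  qed
  show ?thesis using sc diag inner by blast
qed




theorem proposition2p2:
  fixes g :: "real \<Rightarrow> real"
  assumes "CARD('n) \<ge> 2"
    and "locally_lipschitz g"
    and "\<And>a b. a \<le> b \<Longrightarrow> \<exists>f :: real ^ 'n \<Rightarrow> real. separately_convex f \<and>
                 (\<forall>u\<in>{a..b}. f (\<chi> i. u) = g u)"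
  shows "\<exists>f :: real ^ 'n \<Rightarrow> real. separately_convex f \<and> (\<forall>u. f (\<chi> i. u) = g u)"
proof -
  have "\<exists>i j::'n. i \<noteq> j"
  proof (rule ccontr)
    assume "\<not> (\<exists>i j::'n. i \<noteq> j)"
    then have "(UNIV::'n set) = {undefined}" by auto
    then have "card (UNIV::'n set) = card {undefined::'n}" by (rule arg_cong[where f=card])
    then have "CARD('n) = 1" by simp
    with assms(1) show False by simp
  qed
  then obtain i j :: 'n where ij: "i \<noteq> j" by blast
  define P where "P = (\<lambda>(k::nat) (G::real^'n\<Rightarrow>real). separately_convex G \<and>
      (\<forall>u. -(real k+1) \<le> u \<and> u \<le> real k+1 \<longrightarrow> G (\<chi> l. u) = g u))"
  have stepP: "\<forall>k G. \<exists>G'. P k G \<longrightarrow> P (Suc k) G' \<and> (\<forall>x. (\<forall>l. \<bar>x$l\<bar> \<le> real k) \<longrightarrow> G' x = G x)"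
  proof (intro allI)
    fix k G
    show "\<exists>G'. P k G \<longrightarrow> P (Suc k) G' \<and> (\<forall>x. (\<forall>l. \<bar>x$l\<bar> \<le> real k) \<longrightarrow> G' x = G x)"
    proof (cases "P k G")
      case True
      have le: "-(real k + 2) \<le> real k + 2" by simp
      obtain H :: "real^'n \<Rightarrow> real" where H: "separately_convex H" "\<forall>u\<in>{-(real k+2)..real k+2}. H (\<chi> i. u) = g u"
        using assms(3)[OF le] by blast
      have "\<exists>G'. separately_convex G' \<and> (\<forall>u. -(real k+1+1) \<le> u \<and> u \<le> real k+1+1 \<longrightarrow> G' (\<chi> l. u) = g u)
              \<and> (\<forall>x. (\<forall>l. \<bar>x$l\<bar> \<le> real k + 1 - 1) \<longrightarrow> G' x = G x)"
        by (rule step[OF ij, of "real k + 1" G g H]) (use True H in \<open>auto simp: P_def\<close>)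
      then show ?thesis by (auto simp: P_def algebra_simps)
    next
      case False then show ?thesis by blast
    qed
  qed
  then obtain S where S: "\<And>k G. P k G \<Longrightarrow> P (Suc k) (S k G) \<and> (\<forall>x. (\<forall>l. \<bar>x$l\<bar> \<le> real k) \<longrightarrow> S k G x = G x)"
    by metis
  have le1: "-1 \<le> (1::real)" by simp
  obtain G0 :: "real^'n \<Rightarrow> real" where f0: "separately_convex G0" "\<forall>u\<in>{-1..1}. G0 (\<chi> i. u) = g u"
    using assms(3)[OF le1] by blast
  have G0: "P 0 G0" using f0 by (auto simp: P_def)
  define seq where "seq = rec_nat G0 S"
  have seq0: "seq 0 = G0" and seqS: "\<And>k. seq (Suc k) = S k (seq k)" by (simp_all add: seq_def)
  have seqP: "\<And>k. P k (seq k)"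
  proof -
    fix k show "P k (seq k)"
      by (induction k) (use G0 S in \<open>auto simp: seq0 seqS\<close>)
  qed
  have agree1: "\<And>k x. (\<forall>l. \<bar>x$l\<bar> \<le> real k) \<Longrightarrow> seq (Suc k) x = seq k x"
    using S seqP seqS by metis
  have agree: "\<And>k n x. k \<le> n \<Longrightarrow> (\<forall>l. \<bar>x$l\<bar> \<le> real k) \<Longrightarrow> seq n x = seq k x"
  proof -
    fix k n and x :: "real^'n" assume kn: "k \<le> n" and x: "\<forall>l. \<bar>x$l\<bar> \<le> real k"
    show "seq n x = seq k x"
      using kn
    proof (induction n rule: dec_induct)
      case base then show ?case by simp
    next
      case (step m)
      have "\<forall>l. \<bar>x$l\<bar> \<le> real m" using x step.hyps(1) by (meson of_nat_le_iff order_trans)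
      then show ?case using agree1 step.IH by simp
    qed
  qed
  define f where "f = (\<lambda>x. seq (nat \<lceil>norm x\<rceil>) x)"
  have fk: "\<And>x k. norm x \<le> real k \<Longrightarrow> f x = seq k x"
  proof -
    fix x :: "real^'n" and k assume nx: "norm x \<le> real k"
    have "\<forall>l. \<bar>x$l\<bar> \<le> real (nat \<lceil>norm x\<rceil>)"
      using component_le_norm_cart real_nat_ceiling_ge order_trans by blast
    moreover have "nat \<lceil>norm x\<rceil> \<le> k" using nx by simp
    ultimately show "f x = seq k x" using agree unfolding f_def by metis
  qed
  have scf: "separately_convex f"
    unfolding separately_convex_def
  proof (intro allI)
    fix x :: "real^'n" and i :: 'n
    show "convex_on UNIV (\<lambda>t. f (x + t *\<^sub>R axis i 1))"
      unfolding convex_on_def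
    proof (intro conjI ballI allI impI)
      show "convex (UNIV::real set)" by simp
    next
      fix s t u v :: real assume u: "0 \<le> u" and v: "0 \<le> v" and uv: "u + v = 1"
      define k where "k = nat \<lceil>norm x + \<bar>s\<bar> + \<bar>t\<bar>\<rceil>"
      have nk: "norm (x + r *\<^sub>R axis i 1) \<le> real k" if r: "\<bar>r\<bar> \<le> \<bar>s\<bar> + \<bar>t\<bar>" for r :: real
      proof -
        have "norm (x + r *\<^sub>R axis i 1) \<le> norm x + norm (r *\<^sub>R axis i (1::real))"
          by (rule norm_triangle_ineq)
        also have "\<dots> = norm x + \<bar>r\<bar>" by simp
        also have "\<dots> \<le> norm x + \<bar>s\<bar> + \<bar>t\<bar>" using r by simp
        also have "\<dots> \<le> real k" unfolding k_def by (rule real_nat_ceiling_ge)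
        finally show ?thesis .
      qed
      have r1: "\<bar>u * s + v * t\<bar> \<le> \<bar>s\<bar> + \<bar>t\<bar>"
      proof -
        have "\<bar>u * s\<bar> \<le> \<bar>s\<bar>" using u uv v by (simp add: abs_mult mult_left_le_one_le)
        moreover have "\<bar>v * t\<bar> \<le> \<bar>t\<bar>" using u uv v by (simp add: abs_mult mult_left_le_one_le)
        ultimately show ?thesis by (smt (verit) abs_triangle_ineq)
      qed
      have cv: "convex_on UNIV (\<lambda>r. seq k (x + r *\<^sub>R axis i 1))"
        using seqP[of k] unfolding P_def separately_convex_def by blast
      have "seq k (x + (u * s + v * t) *\<^sub>R axis i 1) \<le> u * seq k (x + s *\<^sub>R axis i 1) + v * seq k (x + t *\<^sub>R axis i 1)"
        using cv u v uv unfolding convex_on_def by auto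
      moreover have "f (x + (u * s + v * t) *\<^sub>R axis i 1) = seq k (x + (u * s + v * t) *\<^sub>R axis i 1)"
        using nk[OF r1] fk by blast
      moreover have "f (x + s *\<^sub>R axis i 1) = seq k (x + s *\<^sub>R axis i 1)"
        using nk[of s] fk by simp
      moreover have "f (x + t *\<^sub>R axis i 1) = seq k (x + t *\<^sub>R axis i 1)"
        using nk[of t] fk by simp
      ultimately show "f (x + (u *\<^sub>R s + v *\<^sub>R t) *\<^sub>R axis i 1) \<le> u * f (x + s *\<^sub>R axis i 1) + v * f (x + t *\<^sub>R axis i 1)"
        by simp
    qed
  qed
  have diagf: "\<forall>u. f (\<chi> i. u) = g u"
  proof
    fix u :: real
    define N where "N = nat \<lceil>norm (\<chi> l. u :: real^'n)\<rceil>"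
    have c1: "\<bar>u\<bar> \<le> norm (\<chi> l. u :: real^'n)"
      using component_le_norm_cart[of "\<chi> l. u :: real^'n" i] by simp
    have "\<bar>u\<bar> \<le> real N"
      unfolding N_def using c1 real_nat_ceiling_ge by (rule order_trans)
    then have "-(real N + 1) \<le> u \<and> u \<le> real N + 1" by linarith
    then have "seq N (\<chi> l. u) = g u" using seqP[of N] unfolding P_def by blast
    then show "f (\<chi> i. u) = g u" by (simp add: f_def N_def)
  qed
  show ?thesis using scf diagf by blast
qed


end
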